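(* Suppose that a group $G$ has a non-elementary action by isometries on a geodesic $\delta$-hyperbolic space $X$, and that $G$ contains a WPD element. Let $o\in X$. For any $0<\eta<1$ there exists $C>0$ such that for any $D>0$ and any $K>0$ there is a finite set $S\subseteq G$ which is $(\eta,C,D)$-Schottky and such that for every $s\in S$ the coarse joint stabilizer $\mathrm{Stab}_K(o,so)$ is finite.
   Context: Gromov product $(x,y)_z=\frac12(d(x,z)+d(y,z)-d(x,y))$. A finite set $S$ is $(\eta,C,D)$-Schottky if for all $x,y\in X$, $\#\{s\in S:(x,sy)_o\le C\}\ge(1-\eta)\#S$ and $\#\{s\in S:(x,s^{-1}y)_o\le C\}\ge(1-\eta)\#S$, and $d(o,so)\ge D$ for all $s\in S$. $\mathrm{Stab}_K(x,y)=\{g\in G:d(x,gx)\le K,\ d(y,gy)\le K\}$. An element $g$ is loxodromic if $\lim_n d(g^no,o)/n>0$; it is WPD if it is loxodromic and for any $x\in X$, $K\ge0$ there is $P\ge1$ with $\mathrm{Stab}_K(x,g^Px)$ finite. The action is non-elementary if there are two loxodromic elements with disjoint fixed sets in $\partial X$. *)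

theory Defs
  imports Complex_Main "HOL-Algebra.Group"
begin

definition gromov :: "'x::metric_space \<Rightarrow> 'x \<Rightarrow> 'x \<Rightarrow> real" where
  "gromov x y z = (dist x z + dist y z - dist x y) / 2"

definition geodesic_space :: "'x::metric_space itself \<Rightarrow> bool" where
  "geodesic_space _ \<longleftrightarrow> (\<forall>x y::'x. \<exists>\<gamma>::real \<Rightarrow> 'x. \<gamma> 0 = x \<and> \<gamma> (dist x y) = y \<and>
      (\<forall>s\<in>{0..dist x y}. \<forall>t\<in>{0..dist x y}. dist (\<gamma> s) (\<gamma> t) = \<bar>s - t\<bar>))"

definition hyperbolic :: "'x::metric_space itself \<Rightarrow> real \<Rightarrow> bool" where
  "hyperbolic _ \<delta> \<longleftrightarrow> \<delta> \<ge> 0 \<and>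
     (\<forall>x y z w::'x. gromov x y w \<ge> min (gromov x z w) (gromov y z w) - \<delta>)"

definition isometric_action :: "('g, 'b) monoid_scheme \<Rightarrow> ('g \<Rightarrow> 'x::metric_space \<Rightarrow> 'x) \<Rightarrow> bool" where
  "isometric_action G act \<longleftrightarrow>
     (\<forall>x. act \<one>\<^bsub>G\<^esub> x = x) \<and>
     (\<forall>g\<in>carrier G. \<forall>h\<in>carrier G. \<forall>x. act (g \<otimes>\<^bsub>G\<^esub> h) x = act g (act h x)) \<and>
     (\<forall>g\<in>carrier G. \<forall>x y. dist (act g x) (act g y) = dist x y)"

definition loxodromic :: "('g, 'b) monoid_scheme \<Rightarrow> ('g \<Rightarrow> 'x::metric_space \<Rightarrow> 'x) \<Rightarrow> 'x \<Rightarrow> 'g \<Rightarrow> bool" where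
  "loxodromic G act x0 g \<longleftrightarrow> g \<in> carrier G \<and>
     (\<exists>L>0. (\<lambda>n::nat. dist (act (g [^]\<^bsub>G\<^esub> n) x0) x0 / real n) \<longlonglongrightarrow> L)"

definition Stab :: "('g, 'b) monoid_scheme \<Rightarrow> ('g \<Rightarrow> 'x::metric_space \<Rightarrow> 'x) \<Rightarrow> real \<Rightarrow> 'x \<Rightarrow> 'x \<Rightarrow> 'g set" where
  "Stab G act K x y = {g \<in> carrier G. dist x (act g x) \<le> K \<and> dist y (act g y) \<le> K}"

definition WPD :: "('g, 'b) monoid_scheme \<Rightarrow> ('g \<Rightarrow> 'x::metric_space \<Rightarrow> 'x) \<Rightarrow> 'x \<Rightarrow> 'g \<Rightarrow> bool" where
  "WPD G act x0 g \<longleftrightarrow> loxodromic G act x0 g \<and>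
     (\<forall>x K. K \<ge> 0 \<longrightarrow> (\<exists>P::nat. P \<ge> 1 \<and> finite (Stab G act K x (act (g [^]\<^bsub>G\<^esub> P) x))))"

text \<open>Sequential Gromov boundary: sequences converging at infinity, up to equivalence.\<close>
definition conv_inf :: "'x::metric_space \<Rightarrow> (nat \<Rightarrow> 'x) \<Rightarrow> bool" where
  "conv_inf x0 \<xi> \<longleftrightarrow> (\<forall>M. \<exists>N. \<forall>n\<ge>N. \<forall>m\<ge>N. gromov (\<xi> n) (\<xi> m) x0 \<ge> M)"

definition bd_equiv :: "'x::metric_space \<Rightarrow> (nat \<Rightarrow> 'x) \<Rightarrow> (nat \<Rightarrow> 'x) \<Rightarrow> bool" where
  "bd_equiv x0 \<xi> \<zeta> \<longleftrightarrow> (\<forall>M. \<exists>N. \<forall>n\<ge>N. \<forall>m\<ge>N. gromov (\<xi> n) (\<zeta> m) x0 \<ge> M)"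

definition bd_fixed :: "('g \<Rightarrow> 'x::metric_space \<Rightarrow> 'x) \<Rightarrow> 'x \<Rightarrow> 'g \<Rightarrow> (nat \<Rightarrow> 'x) \<Rightarrow> bool" where
  "bd_fixed act x0 g \<xi> \<longleftrightarrow> conv_inf x0 \<xi> \<and> bd_equiv x0 (\<lambda>n. act g (\<xi> n)) \<xi>"

definition non_elementary :: "('g, 'b) monoid_scheme \<Rightarrow> ('g \<Rightarrow> 'x::metric_space \<Rightarrow> 'x) \<Rightarrow> 'x \<Rightarrow> bool" where
  "non_elementary G act x0 \<longleftrightarrow> (\<exists>g h. loxodromic G act x0 g \<and> loxodromic G act x0 h \<and>
     \<not> (\<exists>\<xi>. bd_fixed act x0 g \<xi> \<and> bd_fixed act x0 h \<xi>))"

definition schottky :: "('g, 'b) monoid_scheme \<Rightarrow> ('g \<Rightarrow> 'x::metric_space \<Rightarrow> 'x) \<Rightarrow> 'x \<Rightarrow> real \<Rightarrow> real \<Rightarrow> real \<Rightarrow> 'g set \<Rightarrow> bool" where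
  "schottky G act x0 \<eta> C D S \<longleftrightarrow> finite S \<and> S \<noteq> {} \<and> S \<subseteq> carrier G \<and>
     (\<forall>x y. real (card {s\<in>S. gromov x (act s y) x0 \<le> C}) \<ge> (1 - \<eta>) * real (card S) \<and>
            real (card {s\<in>S. gromov x (act (inv\<^bsub>G\<^esub> s) y) x0 \<le> C}) \<ge> (1 - \<eta>) * real (card S)) \<and>
     (\<forall>s\<in>S. dist x0 (act s x0) \<ge> D)"

end

theory Submission
  imports Defs
begin

lemma gromov_sym: "gromov x y w = gromov y x w"
  unfolding gromov_def by (simp add: dist_commute)

lemma gromov_nonneg: "gromov x y w \<ge> 0"
  unfolding gromov_def using dist_triangle[of x y w] by (simp add: dist_commute)

lemma gromov_le_dist: "gromov x y w \<le> dist x w"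
  unfolding gromov_def using dist_triangle[of y w x] by (simp add: dist_commute)

lemma gromov_id: "gromov x y w + gromov w y x = dist w x"
  unfolding gromov_def by (simp add: dist_commute field_simps)

lemma gromov_self: "gromov x y x = 0"
  unfolding gromov_def by (simp add: dist_commute)

lemma gromov_base0: "gromov w y w = 0"
  unfolding gromov_def by (simp add: dist_commute)

lemma gromov_self2: "gromov x y y = 0"
  unfolding gromov_def by (simp add: dist_commute)

lemma gromov_same: "gromov x x w = dist x w"
  unfolding gromov_def by (simp add: dist_commute)

lemma min_aux: "min a b - d \<le> c \<Longrightarrow> c < a - d \<Longrightarrow> b - d \<le> (c::real)"
  by (auto simp: min_def split: if_split_asm)

lemma gromov_perturb:
  "gromov x y w \<le> gromov x' y' w' + dist x x' + dist y y' + dist w w'"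
proof -
  have "dist x w \<le> dist x' w' + dist x x' + dist w w'"
    using dist_triangle[of x w x'] dist_triangle[of x' w w'] by (simp add: dist_commute)
  moreover have "dist y w \<le> dist y' w' + dist y y' + dist w w'"
    using dist_triangle[of y w y'] dist_triangle[of y' w w'] by (simp add: dist_commute)
  moreover have "dist x' y' \<le> dist x y + dist x x' + dist y y'"
    using dist_triangle[of x' y' x] dist_triangle[of x y' y] by (simp add: dist_commute)
  ultimately show ?thesis unfolding gromov_def by (simp add: field_simps)
qed

lemma tri3: "dist a d \<le> dist a b + dist b c + dist c d"
  using dist_triangle[of a d b] dist_triangle[of b d c] by linarith

lemma gromov_base:
  "gromov x y w \<le> gromov x y w' + dist w w'"
  using gromov_perturb[of x y w x y w'] by simp

locale hact = group G for G (structure) +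
  fixes act :: "'a \<Rightarrow> 'x::metric_space \<Rightarrow> 'x" and \<delta> :: real
  assumes isom: "isometric_action G act" and hyp: "hyperbolic TYPE('x) \<delta>"
begin

lemma delta_nonneg: "\<delta> \<ge> 0" using hyp unfolding hyperbolic_def by auto

lemma hyp4: "gromov (x::'x) y w \<ge> min (gromov x z w) (gromov y z w) - \<delta>"
  using hyp unfolding hyperbolic_def apply (elim conjE) apply (erule allE)+ apply assumption done

lemma act_one[simp]: "act \<one> x = x" using isom unfolding isometric_action_def by auto

lemma act_mult: "g \<in> carrier G \<Longrightarrow> h \<in> carrier G \<Longrightarrow> act (g \<otimes> h) x = act g (act h x)"
  using isom unfolding isometric_action_def by auto

lemma act_dist[simp]: "g \<in> carrier G \<Longrightarrow> dist (act g x) (act g y) = dist x y"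
  using isom unfolding isometric_action_def by auto

lemma act_inv1[simp]: "g \<in> carrier G \<Longrightarrow> act (inv g) (act g x) = x"
  using act_mult[of "inv g" g x] by simp

lemma act_inv2[simp]: "g \<in> carrier G \<Longrightarrow> act g (act (inv g) x) = x"
  using act_mult[of g "inv g" x] by simp

lemma gromov_act[simp]: "g \<in> carrier G \<Longrightarrow> gromov (act g x) (act g y) (act g w) = gromov x y w"
  unfolding gromov_def by simp

lemma gromov_act_base: "g \<in> carrier G \<Longrightarrow> gromov (act g x) (act g y) w = gromov x y (act (inv g) w)"
  using gromov_act[of g x y "act (inv g) w"] by simp

lemma act_pow_add: "g \<in> carrier G \<Longrightarrow> act (g [^] ((n::nat) + m)) x = act (g [^] n) (act (g [^] m) x)"
  using act_mult[of "g[^]n" "g[^]m" x] nat_pow_mult[of g n m] by simp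

lemma dist_pow_shift: "g \<in> carrier G \<Longrightarrow> (m::nat) \<le> n \<Longrightarrow>
   dist (act (g [^] n) x) (act (g [^] m) x) = dist (act (g [^] (n - m)) x) x"
proof -
  assume a: "g \<in> carrier G" "m \<le> n"
  have "act (g[^]n) x = act (g[^]m) (act (g[^](n-m)) x)" using act_pow_add[of g m "n-m" x] a by (simp add: le_add_diff_inverse)
  then show ?thesis using a by simp
qed


lemma chain_fwd:
  fixes x :: "nat \<Rightarrow> 'x"
  assumes d: "\<And>i. i+1 \<le> N \<Longrightarrow> dist (x i) (x (i+1)) \<ge> A"
    and c: "\<And>i. i+2 \<le> N \<Longrightarrow> gromov (x i) (x (i+2)) (x (i+1)) \<le> c"
    and A: "A > 2*c + 2*\<delta>"
  shows "1 \<le> n \<Longrightarrow> n+1 \<le> N \<Longrightarrow> gromov (x 0) (x (n+1)) (x n) \<le> c + \<delta>"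
proof (induction n)
  case 0
  then show ?case by simp
next
  case (Suc n)
  show ?case
  proof (cases "n = 0")
    case True
    then show ?thesis using c[of 0] Suc.prems delta_nonneg by simp
  next
    case False
    have IH: "gromov (x 0) (x (n+1)) (x n) \<le> c + \<delta>" using Suc False by simp
    have h1: "gromov (x n) (x (n+2)) (x (n+1)) \<ge> min (gromov (x n) (x 0) (x (n+1))) (gromov (x (n+2)) (x 0) (x (n+1))) - \<delta>"
      by (rule hyp4)
    have h2: "gromov (x n) (x (n+2)) (x (n+1)) \<le> c" using c[of n] Suc.prems by simp
    have h3: "gromov (x n) (x 0) (x (n+1)) + gromov (x (n+1)) (x 0) (x n) = dist (x (n+1)) (x n)"
      by (rule gromov_id)
    have h4: "gromov (x (n+1)) (x 0) (x n) \<le> c + \<delta>" using IH gromov_sym by metis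
    have h5: "dist (x (n+1)) (x n) \<ge> A" using d[of n] Suc.prems by (simp add: dist_commute)
    have "gromov (x (n+2)) (x 0) (x (n+1)) - \<delta> \<le> c"
      by (rule min_aux[OF order_trans[OF h1 h2]]) (use h3 h4 h5 A in linarith)
    then have "gromov (x 0) (x (n+2)) (x (n+1)) \<le> c + \<delta>" using gromov_sym by (metis diff_le_eq)
    then show ?thesis by (simp add: numeral_2_eq_2)
  qed
qed

lemma chain_mid:
  fixes x :: "nat \<Rightarrow> 'x"
  assumes d: "\<And>i. i+1 \<le> N \<Longrightarrow> dist (x i) (x (i+1)) \<ge> A"
    and c: "\<And>i. i+2 \<le> N \<Longrightarrow> gromov (x i) (x (i+2)) (x (i+1)) \<le> c"
    and A: "A > 2*c + 3*\<delta>"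
    and j: "0 < j" "j < m" "m \<le> N"
  shows "gromov (x 0) (x m) (x j) \<le> c + 2*\<delta>"
proof -
  have A2: "A > 2*c + 2*\<delta>" using A delta_nonneg by linarith
  have F1: "gromov (x 0) (x (j+1)) (x j) \<le> c + \<delta>"
    using chain_fwd[OF d c A2, where n=j] j by simp
  show ?thesis
  proof (cases "m = j+1")
    case True
    then show ?thesis using F1 delta_nonneg by simp
  next
    case False
    then have jm: "j + 2 \<le> m" using j by simp
    define y where "y = (\<lambda>i. x (m - i))"
    have dy: "dist (y i) (y (i+1)) \<ge> A" if "i+1 \<le> m" for i
    proof -
      have e: "m - i = (m - (i+1)) + 1" using that by simp
      have "dist (x (m - (i+1))) (x (m - (i+1) + 1)) \<ge> A" using d[of "m - (i+1)"] that j by simp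
      then show ?thesis unfolding y_def using e by (simp add: dist_commute)
    qed
    have cy: "gromov (y i) (y (i+2)) (y (i+1)) \<le> c" if "i+2 \<le> m" for i
    proof -
      have e1: "m - i = (m - (i+2)) + 2" and e2: "m - (i+1) = (m - (i+2)) + 1" using that by simp_all
      have "gromov (x (m - (i+2))) (x (m - (i+2) + 2)) (x (m - (i+2) + 1)) \<le> c"
        using c[of "m - (i+2)"] that j by simp
      then show ?thesis unfolding y_def using e1 e2 gromov_sym by metis
    qed
    have F2': "gromov (y 0) (y (m-j-1+1)) (y (m-j-1)) \<le> c + \<delta>"
      using chain_fwd[OF dy cy A2, where n="m-j-1"] jm by simp
    have e3: "m - (m-j-1+1) = j" "m - (m-j-1) = j+1" using jm by simp_all
    have F2: "gromov (x j) (x m) (x (j+1)) \<le> c + \<delta>"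
      using F2' unfolding y_def e3 using gromov_sym by (metis diff_zero)
    have h1: "gromov (x 0) (x (j+1)) (x j) \<ge> min (gromov (x 0) (x m) (x j)) (gromov (x (j+1)) (x m) (x j)) - \<delta>"
      by (rule hyp4)
    have h3: "gromov (x (j+1)) (x m) (x j) + gromov (x j) (x m) (x (j+1)) = dist (x j) (x (j+1))"
      by (rule gromov_id)
    have h5: "dist (x j) (x (j+1)) \<ge> A" using d[of j] jm j by simp
    have "gromov (x 0) (x m) (x j) \<le> min (gromov (x 0) (x m) (x j)) (gromov (x (j+1)) (x m) (x j))"
    proof (rule ccontr)
      assume "\<not> ?thesis"
      then have "min (gromov (x 0) (x m) (x j)) (gromov (x (j+1)) (x m) (x j)) = gromov (x (j+1)) (x m) (x j)"
        by (auto simp: min_def split: if_split_asm)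
      then show False using h1 h3 h5 F1 F2 A by linarith
    qed
    then show ?thesis using h1 F1 by linarith
  qed
qed

definition dd :: "'a \<Rightarrow> 'x \<Rightarrow> nat \<Rightarrow> real" where
  "dd g p n = dist (act (g [^] n) p) p"

lemma dd_0[simp]: "dd g p 0 = 0" unfolding dd_def by simp

lemma dd_nonneg: "dd g p n \<ge> 0" unfolding dd_def by simp

lemma dd_add: "g \<in> carrier G \<Longrightarrow> dd g p (n + m) \<le> dd g p n + dd g p m"
proof -
  assume g: "g \<in> carrier G"
  have "dd g p (n+m) = dist (act (g[^]n) (act (g[^]m) p)) p" unfolding dd_def using act_pow_add[OF g] by simp
  also have "\<dots> \<le> dist (act (g[^]n) (act (g[^]m) p)) (act (g[^]n) p) + dist (act (g[^]n) p) p"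
    by (rule dist_triangle)
  also have "\<dots> = dd g p m + dd g p n" unfolding dd_def using g by simp
  finally show ?thesis by simp
qed

lemma dd_mult: "g \<in> carrier G \<Longrightarrow> dd g p (k * n) \<le> real k * dd g p n"
proof (induction k)
  case 0
  then show ?case by simp
next
  case (Suc k)
  have "dd g p (Suc k * n) = dd g p (n + k * n)" by simp
  also have "\<dots> \<le> dd g p n + dd g p (k * n)" using dd_add[OF Suc.prems] by blast
  also have "\<dots> \<le> dd g p n + real k * dd g p n" using Suc by simp
  finally show ?case by (simp add: algebra_simps)
qed

lemma lox_lower:
  assumes "loxodromic G act p g"
  shows "\<exists>L>0. (\<forall>n. dd g p n \<ge> L * real n) \<and> (\<lambda>n. dd g p n / real n) \<longlonglongrightarrow> L"
proof -
  obtain L where L: "L > 0" "(\<lambda>n. dd g p n / real n) \<longlonglongrightarrow> L"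
    using assms unfolding loxodromic_def dd_def by auto
  have g: "g \<in> carrier G" using assms unfolding loxodromic_def by auto
  have "dd g p n \<ge> L * real n" for n
  proof (cases "n = 0")
    case True
    then show ?thesis by simp
  next
    case False
    have sm: "strict_mono (\<lambda>k. k * n)" using False by (simp add: strict_mono_def)
    have lim: "(\<lambda>k. dd g p (k*n) / real (k*n)) \<longlonglongrightarrow> L"
      using LIMSEQ_subseq_LIMSEQ[OF L(2) sm] by (simp add: o_def)
    have "\<forall>k\<ge>1. dd g p (k*n) / real (k*n) \<le> dd g p n / real n"
    proof (intro allI impI)
      fix k :: nat assume k: "k \<ge> 1"
      have "dd g p (k*n) \<le> real k * dd g p n" by (rule dd_mult[OF g])
      then show "dd g p (k*n) / real (k*n) \<le> dd g p n / real n"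
        using k False by (simp add: divide_simps mult.commute mult.left_commute)
    qed
    then have "L \<le> dd g p n / real n" using LIMSEQ_le_const2[OF lim] by blast
    then show ?thesis using False by (simp add: field_simps)
  qed
  then show ?thesis using L by blast
qed

lemma lox_carrier: "loxodromic G act p g \<Longrightarrow> g \<in> carrier G"
  unfolding loxodromic_def by auto

lemma dd_inv: "g \<in> carrier G \<Longrightarrow> dd (inv g) p n = dd g p n"
proof -
  assume g: "g \<in> carrier G"
  have "dd (inv g) p n = dist (act (inv (g[^]n)) p) p" unfolding dd_def using nat_pow_inv[OF g] by simp
  also have "\<dots> = dist (act (g[^]n) (act (inv (g[^]n)) p)) (act (g[^]n) p)"
    using g act_dist[of "g[^]n" "act (inv (g[^]n)) p" p] by simp
  also have "\<dots> = dd g p n" unfolding dd_def using g by (simp add: dist_commute)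
  finally show ?thesis .
qed

lemma lox_inv: "loxodromic G act p g \<Longrightarrow> loxodromic G act p (inv g)"
proof -
  assume l: "loxodromic G act p g"
  have g: "g \<in> carrier G" using l by (rule lox_carrier)
  have "\<And>n::nat. dist (act (inv g [^] n) p) p = dist (act (g [^] n) p) p"
    using dd_inv[OF g] unfolding dd_def by simp
  then show ?thesis using l g unfolding loxodromic_def by simp
qed

lemma lox_big:
  assumes "loxodromic G act p g"
  shows "\<exists>k>0. dd g p (2*k) - dd g p k > 3*\<delta>"
proof -
  obtain L where L: "L > 0" "\<And>n. dd g p n \<ge> L * real n" "(\<lambda>n. dd g p n / real n) \<longlonglongrightarrow> L"
    using lox_lower[OF assms] by blast
  have "eventually (\<lambda>n. dd g p n / real n < 3*L/2) sequentially"
    using order_tendstoD(2)[OF L(3), of "3*L/2"] L(1) by simp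
  moreover have "eventually (\<lambda>n. n \<ge> nat \<lceil>6*\<delta>/L\<rceil> + 1) sequentially"
    by (rule eventually_ge_at_top)
  ultimately have "eventually (\<lambda>n. dd g p n / real n < 3*L/2 \<and> n \<ge> nat \<lceil>6*\<delta>/L\<rceil> + 1) sequentially"
    by (rule eventually_conj)
  then obtain k where k: "dd g p k / real k < 3*L/2" "k \<ge> nat \<lceil>6*\<delta>/L\<rceil> + 1"
    unfolding eventually_sequentially by blast
  have k0: "k > 0" using k(2) by simp
  have "real k > 6*\<delta>/L" using k(2) by linarith
  then have kd: "L * real k > 6 * \<delta>" using L(1) by (simp add: field_simps)
  have a: "dd g p k < 3*L/2 * real k" using k(1) k0 by (simp add: field_simps)
  have b: "dd g p (2*k) \<ge> L * real (2*k)" by (rule L(2))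
  have "dd g p (2*k) - dd g p k > 3*\<delta>" using a b kd by simp
  then show ?thesis using k0 by blast
qed


lemma move:
  fixes x y y' z :: 'x
  assumes "gromov x z y \<le> c" "dist x y' \<le> dist x y + K" "dist x y \<le> dist x y' + K"
    "dist z y' \<le> dist z y + K"
  shows "dist y y' \<le> 3*K + 2*c + 2*\<delta>"
proof -
  have e1: "gromov y z x = dist x y - gromov x z y" using gromov_id[of y z x] by simp
  have e2: "gromov y' z x = dist x y' - gromov x z y'" using gromov_id[of y' z x] by simp
  have e3: "gromov x z y' \<le> gromov x z y + K" unfolding gromov_def using assms(2,4) by (simp add: field_simps)
  have e4: "dist y y' = dist x y + dist x y' - 2 * gromov y y' x" unfolding gromov_def by (simp add: dist_commute field_simps)
  have h: "gromov y y' x \<ge> min (gromov y z x) (gromov y' z x) - \<delta>" by (rule hyp4)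
  consider "min (gromov y z x) (gromov y' z x) = gromov y z x" | "min (gromov y z x) (gromov y' z x) = gromov y' z x"
    by (metis min_def)
  then show ?thesis
  proof cases
    case 1
    then show ?thesis using h e1 e4 assms(1,2,3) by linarith
  next
    case 2
    then show ?thesis using h e2 e3 e4 assms(1,2,3) by linarith
  qed
qed

lemma lox_qg:
  assumes "loxodromic G act p g"
  shows "\<exists>c\<ge>0. \<forall>n m. n \<le> m \<longrightarrow> gromov p (act (g[^]m) p) (act (g[^](n::nat)) p) \<le> c"
proof -
  have g: "g \<in> carrier G" using assms by (rule lox_carrier)
  obtain k where k: "k > 0" "dd g p (2*k) - dd g p k > 3*\<delta>" using lox_big[OF assms] by blast
  define x where "x = (\<lambda>i. act (g[^](k*i)) p)"
  define A where "A = dd g p k"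
  define c0 where "c0 = gromov p (act (g[^](2*k)) p) (act (g[^]k) p)"
  have xs: "x (i+1) = act (g[^](k*i)) (act (g[^]k) p)" for i
    unfolding x_def using act_pow_add[OF g, of "k*i" k p] by (simp add: algebra_simps)
  have xs2: "x (i+2) = act (g[^](k*i)) (act (g[^](2*k)) p)" for i
  proof -
    have e: "k*(i+2) = k*i + 2*k" by (simp add: algebra_simps)
    show ?thesis unfolding x_def e by (rule act_pow_add[OF g])
  qed
  have d: "dist (x i) (x (i+1)) \<ge> A" for i
    unfolding xs A_def dd_def using g by (simp add: x_def dist_commute)
  have c: "gromov (x i) (x (i+2)) (x (i+1)) \<le> c0" for i
    unfolding xs xs2 c0_def using g by (simp add: x_def)
  have sh: "dist (act (g[^](2*k)) p) (act (g[^]k) p) = dd g p k"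
    unfolding dd_def using dist_pow_shift[OF g, of k "2*k" p] by simp
  have Ac: "A > 2*c0 + 3*\<delta>"
    using k(2) sh unfolding A_def c0_def gromov_def dd_def by (simp add: dist_commute field_simps)
  have mid: "gromov (x 0) (x q') (x q) \<le> c0 + 2*\<delta>" if "q \<le> q'" for q q' :: nat
  proof -
    have c0n: "c0 \<ge> 0" unfolding c0_def by (rule gromov_nonneg)
    show ?thesis
    proof (cases "q = 0 \<or> q = q'")
      case True
      then show ?thesis using c0n delta_nonneg by (auto simp: gromov_base0 gromov_self2)
    next
      case False
      then show ?thesis using chain_mid[OF d c Ac, of q q' q'] that by simp
    qed
  qed
  define R where "R = Max (dd g p ` {..<k})"
  have R: "dd g p r \<le> R" if "r < k" for r
    unfolding R_def using that by (intro Max_ge) auto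
  have R0: "R \<ge> 0" using R[of 0] k(1) by simp
  have near: "dist (act (g[^]n) p) (x (n div k)) \<le> R" for n :: nat
  proof -
    have "n = k * (n div k) + n mod k" by simp
    then have "act (g[^]n) p = act (g[^](k * (n div k))) (act (g[^](n mod k)) p)"
      using act_pow_add[OF g, of "k * (n div k)" "n mod k" p] by metis
    then have "dist (act (g[^]n) p) (x (n div k)) = dd g p (n mod k)"
      unfolding x_def dd_def using g by simp
    then show ?thesis using R[of "n mod k"] k(1) by simp
  qed
  have x0: "x 0 = p" unfolding x_def by simp
  have "gromov p (act (g[^]m) p) (act (g[^]n) p) \<le> c0 + 2*\<delta> + 2*R" if "n \<le> m" for n m :: nat
  proof -
    have "gromov p (act (g[^]m) p) (act (g[^]n) p) \<le> gromov (x 0) (x (m div k)) (x (n div k))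
       + dist p (x 0) + dist (act (g[^]m) p) (x (m div k)) + dist (act (g[^]n) p) (x (n div k))"
      by (rule gromov_perturb)
    moreover have "gromov (x 0) (x (m div k)) (x (n div k)) \<le> c0 + 2*\<delta>"
      using mid that div_le_mono by blast
    ultimately show ?thesis using near[of m] near[of n] x0 by simp
  qed
  moreover have "c0 + 2*\<delta> + 2*R \<ge> 0" using gromov_nonneg[of p _ _] R0 delta_nonneg unfolding c0_def
    by (smt (verit))
  ultimately show ?thesis by blast
qed

lemma lox_qsym:
  assumes "loxodromic G act p g"
  shows "\<exists>c\<ge>0. \<forall>n m. gromov (act (g[^]n) p) (act (g[^](m::nat)) p) p \<ge> dd g p (min n m) - c"
proof -
  obtain c where c: "c \<ge> 0" "\<And>n m. n \<le> m \<Longrightarrow> gromov p (act (g[^]m) p) (act (g[^](n::nat)) p) \<le> c"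
    using lox_qg[OF assms] by blast
  have a: "gromov (act (g[^]n) p) (act (g[^](m::nat)) p) p \<ge> dd g p n - c" if "n \<le> m" for n m
    using gromov_id[of "act (g[^]n) p" "act (g[^](m::nat)) p" p] c(2)[OF that]
    unfolding dd_def by (simp add: dist_commute)
  have "gromov (act (g[^]n) p) (act (g[^](m::nat)) p) p \<ge> dd g p (min n m) - c" for n m
  proof (cases "n \<le> m")
    case True
    then show ?thesis using a by (simp add: min_def)
  next
    case False
    have "gromov (act (g[^]n) p) (act (g[^]m) p) p = gromov (act (g[^]m) p) (act (g[^]n) p) p"
      by (rule gromov_sym)
    moreover have "min n m = m" using False by simp
    ultimately show ?thesis using a[of m n] False by simp
  qed
  then show ?thesis using c(1) by blast
qed

lemma stab_big:
  assumes "WPD G act p g" "K \<ge> 0"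
  shows "\<exists>n. dd g p n \<ge> D \<and> finite (Stab G act K p (act (g[^]n) p))"
proof -
  have lox: "loxodromic G act p g" using assms unfolding WPD_def by auto
  have g: "g \<in> carrier G" using lox by (rule lox_carrier)
  obtain c where c: "c \<ge> 0" "\<And>n m. n \<le> m \<Longrightarrow> gromov p (act (g[^]m) p) (act (g[^](n::nat)) p) \<le> c"
    using lox_qg[OF lox] by blast
  define K' where "K' = 3*K + 2*c + 2*\<delta>"
  have K': "K' \<ge> K" "K' \<ge> 0" unfolding K'_def using c(1) assms(2) delta_nonneg by auto
  obtain P :: nat where P: "P \<ge> 1" "finite (Stab G act K' p (act (g[^]P) p))"
    using assms(1) K'(2) unfolding WPD_def by blast
  obtain L where L: "L > 0" "\<And>n. dd g p n \<ge> L * real n" using lox_lower[OF lox] by blast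
  define n where "n = max P (nat \<lceil>D/L\<rceil>)"
  have "real n \<ge> D / L" unfolding n_def by linarith
  then have "L * real n \<ge> D" using L(1) by (simp add: field_simps)
  then have dn: "dd g p n \<ge> D" using L(2)[of n] by linarith
  have Pn: "P \<le> n" unfolding n_def by simp
  have "Stab G act K p (act (g[^]n) p) \<subseteq> Stab G act K' p (act (g[^]P) p)"
  proof
    fix f assume "f \<in> Stab G act K p (act (g[^]n) p)"
    then have f: "f \<in> carrier G" "dist p (act f p) \<le> K" "dist (act (g[^]n) p) (act f (act (g[^]n) p)) \<le> K"
      unfolding Stab_def by auto
    define y where "y = act (g[^]P) p"
    define z where "z = act (g[^]n) p"
    have f3: "dist z (act f z) \<le> K" using f(3) unfolding z_def .
    have m1: "gromov p z y \<le> c" unfolding y_def z_def using c(2)[OF Pn] .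
    have m2: "dist p (act f y) \<le> dist p y + K"
      using dist_triangle[of p "act f y" "act f p"] f(1,2) by simp
    have m3: "dist p y \<le> dist p (act f y) + K"
      using dist_triangle[of "act f p" "act f y" p] f(1,2) by (simp add: dist_commute)
    have m4: "dist z (act f y) \<le> dist z y + K"
      using dist_triangle[of z "act f y" "act f z"] f(1) f3 by simp
    have "dist y (act f y) \<le> K'" using move[OF m1 m2 m3 m4] unfolding K'_def by simp
    then show "f \<in> Stab G act K' p (act (g[^]P) p)" using f K' unfolding Stab_def y_def by auto
  qed
  then have "finite (Stab G act K p (act (g[^]n) p))" using P(2) finite_subset by blast
  then show ?thesis using dn by blast
qed


lemma conv_orbit:
  assumes "loxodromic G act p e"
  shows "conv_inf p (\<lambda>n. act (e[^]n) p)"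
  unfolding conv_inf_def
proof
  fix M :: real
  obtain c where c: "c \<ge> 0" "\<And>n m. gromov (act (e[^]n) p) (act (e[^](m::nat)) p) p \<ge> dd e p (min n m) - c"
    using lox_qsym[OF assms] by blast
  obtain L where L: "L > 0" "\<And>n. dd e p n \<ge> L * real n" using lox_lower[OF assms] by blast
  define N where "N = nat \<lceil>(M + c)/L\<rceil>"
  have "gromov (act (e[^]n) p) (act (e[^]m) p) p \<ge> M" if "n \<ge> N" "m \<ge> N" for n m :: nat
  proof -
    have "real (min n m) \<ge> (M + c)/L" using that unfolding N_def by linarith
    then have "L * real (min n m) \<ge> M + c" using L(1) by (simp add: field_simps)
    then show ?thesis using c(2)[of n m] L(2)[of "min n m"] by linarith
  qed
  then show "\<exists>N. \<forall>n\<ge>N. \<forall>m\<ge>N. M \<le> gromov (act (e [^] (n::nat)) p) (act (e [^] (m::nat)) p) p" by blast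
qed

lemma act_pow_Suc: "e \<in> carrier G \<Longrightarrow> act e (act (e[^](n::nat)) x) = act (e[^](Suc n)) x"
  using act_mult[of e "e[^]n" x] nat_pow_Suc2[of e n] by simp

lemma fix_self:
  assumes "loxodromic G act p e"
  shows "bd_fixed act p e (\<lambda>n. act (e[^]n) p)"
proof -
  have e: "e \<in> carrier G" using assms by (rule lox_carrier)
  have cv: "conv_inf p (\<lambda>n. act (e[^]n) p)" by (rule conv_orbit[OF assms])
  have "bd_equiv p (\<lambda>n. act e (act (e[^]n) p)) (\<lambda>n. act (e[^]n) p)"
    unfolding bd_equiv_def
  proof
    fix M
    obtain N where N: "\<forall>n\<ge>N. \<forall>m\<ge>N. M \<le> gromov (act (e [^] (n::nat)) p) (act (e [^] (m::nat)) p) p"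
      using cv unfolding conv_inf_def by blast
    show "\<exists>N. \<forall>n\<ge>N. \<forall>m\<ge>N. M \<le> gromov (act e (act (e [^] (n::nat)) p)) (act (e [^] (m::nat)) p) p"
      using N act_pow_Suc[OF e] by (metis le_SucI)
  qed
  then show ?thesis using cv unfolding bd_fixed_def by simp
qed

lemma fix_other:
  assumes le: "loxodromic G act p e" and lf: "loxodromic G act p f"
    and unb: "\<not> (\<exists>B. \<forall>n s. gromov (act (e[^](n::nat)) p) (act (f[^](s::nat)) p) p \<le> B)"
  shows "bd_fixed act p f (\<lambda>n. act (e[^]n) p)"
proof -
  have e: "e \<in> carrier G" using le by (rule lox_carrier)
  have f: "f \<in> carrier G" using lf by (rule lox_carrier)
  have cv: "conv_inf p (\<lambda>n. act (e[^]n) p)" by (rule conv_orbit[OF le])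
  obtain ce where ce: "ce \<ge> 0" "\<And>n m. gromov (act (e[^]n) p) (act (e[^](m::nat)) p) p \<ge> dd e p (min n m) - ce"
    using lox_qsym[OF le] by blast
  obtain cf where cf: "cf \<ge> 0" "\<And>n m. gromov (act (f[^]n) p) (act (f[^](m::nat)) p) p \<ge> dd f p (min n m) - cf"
    using lox_qsym[OF lf] by blast
  define a1 where "a1 = dist (act f p) p"
  have "bd_equiv p (\<lambda>n. act f (act (e[^]n) p)) (\<lambda>n. act (e[^]n) p)"
    unfolding bd_equiv_def
  proof
    fix M
    define T where "T = M + ce + cf + a1 + 3*\<delta>"
    obtain n0 s0 where ns: "gromov (act (e[^](n0::nat)) p) (act (f[^](s0::nat)) p) p > T"
      using unb by (meson not_le)
    define F0 where "F0 = act (f[^]s0) p"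
    define F1 where "F1 = act (f[^](Suc s0)) p"
    have F1: "act f F0 = F1" unfolding F0_def F1_def using act_pow_Suc[OF f] by simp
    have dn0: "dd e p n0 \<ge> T" using ns gromov_le_dist[of "act (e[^]n0) p" F0 p]
      unfolding dd_def F0_def by linarith
    have ds0: "dd f p s0 \<ge> T" using ns gromov_le_dist[of F0 "act (e[^]n0) p" p] gromov_sym
      unfolding dd_def F0_def by (metis order.strict_trans1 less_le_not_le not_le)
    have g1: "gromov (act (e[^]n) p) F0 p \<ge> T - ce - \<delta>" if "n \<ge> n0" for n :: nat
    proof -
      have "min n n0 = n0" using that by simp
      then have "gromov (act (e[^]n) p) (act (e[^]n0) p) p \<ge> T - ce" using ce(2)[of n n0] that dn0
        by simp
      moreover have "gromov F0 (act (e[^]n0) p) p > T" using ns gromov_sym unfolding F0_def by metis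
      moreover have "gromov (act (e[^]n) p) F0 p \<ge> min (gromov (act (e[^]n) p) (act (e[^]n0) p) p) (gromov F0 (act (e[^]n0) p) p) - \<delta>"
        by (rule hyp4)
      ultimately show ?thesis using ce(1) by (simp add: min_def split: if_split_asm)
    qed
    have g3: "gromov F1 F0 p \<ge> T - cf"
      using cf(2)[of "Suc s0" s0] ds0 unfolding F0_def F1_def by (simp add: min_def)
    have "M \<le> gromov (act f (act (e [^] n) p)) (act (e [^] m) p) p" if "n \<ge> n0" "m \<ge> n0" for n m :: nat
    proof -
      have "gromov (act f (act (e[^]n) p)) F1 p = gromov (act (e[^]n) p) F0 (act (inv f) p)"
        using gromov_act_base[OF f] F1 by metis
      moreover have "gromov (act (e[^]n) p) F0 p \<le> gromov (act (e[^]n) p) F0 (act (inv f) p) + dist p (act (inv f) p)"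
        by (rule gromov_base)
      moreover have "dist p (act (inv f) p) = a1" unfolding a1_def
        using act_dist[OF f, of p "act (inv f) p"] f by (simp add: dist_commute)
      ultimately have g2: "gromov (act f (act (e[^]n) p)) F1 p \<ge> T - ce - \<delta> - a1" using g1[OF that(1)] by linarith
      have g4: "gromov F0 (act (e[^]m) p) p \<ge> T - ce - \<delta>" using g1[OF that(2)] gromov_sym by metis
      have h5: "gromov F1 (act (e[^]m) p) p \<ge> min (gromov F1 F0 p) (gromov (act (e[^]m) p) F0 p) - \<delta>"
        by (rule hyp4)
      have g5: "gromov F1 (act (e[^]m) p) p \<ge> T - ce - cf - 2*\<delta>"
        using h5 g3 g4 gromov_sym[of "act (e[^]m) p" F0 p] ce(1) cf(1) delta_nonneg
        by (simp add: min_def split: if_split_asm)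
      have h6: "gromov (act f (act (e[^]n) p)) (act (e[^]m) p) p \<ge>
          min (gromov (act f (act (e[^]n) p)) F1 p) (gromov (act (e[^]m) p) F1 p) - \<delta>"
        by (rule hyp4)
      have a1n: "a1 \<ge> 0" unfolding a1_def by simp
      show ?thesis using h6 g2 g5 gromov_sym[of "act (e[^]m) p" F1 p] ce(1) cf(1) delta_nonneg a1n
        unfolding T_def by (simp add: min_def split: if_split_asm)
    qed
    then show "\<exists>N. \<forall>n\<ge>N. \<forall>m\<ge>N. M \<le> gromov (act f (act (e [^] (n::nat)) p)) (act (e [^] (m::nat)) p) p" by blast
  qed
  then show ?thesis using cv unfolding bd_fixed_def by simp
qed

lemma fix_inv:
  assumes f: "f \<in> carrier G" and b: "bd_fixed act p (inv f) \<xi>"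
  shows "bd_fixed act p f \<xi>"
proof -
  define a1 where "a1 = dist p (act (inv f) p)"
  have "bd_equiv p (\<lambda>n. act f (\<xi> n)) \<xi>"
    unfolding bd_equiv_def
  proof
    fix M
    obtain N where N: "\<forall>n\<ge>N. \<forall>m\<ge>N. M + a1 \<le> gromov (act (inv f) (\<xi> n)) (\<xi> m) p"
      using b unfolding bd_fixed_def bd_equiv_def by blast
    have "M \<le> gromov (act f (\<xi> n)) (\<xi> m) p" if "n \<ge> N" "m \<ge> N" for n m
    proof -
      have "gromov (act f (\<xi> n)) (\<xi> m) p = gromov (act f (\<xi> n)) (act f (act (inv f) (\<xi> m))) p"
        using f by simp
      also have "\<dots> = gromov (\<xi> n) (act (inv f) (\<xi> m)) (act (inv f) p)"
        by (rule gromov_act_base[OF f])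
      finally have e: "gromov (act f (\<xi> n)) (\<xi> m) p = gromov (\<xi> n) (act (inv f) (\<xi> m)) (act (inv f) p)" .
      have "gromov (\<xi> n) (act (inv f) (\<xi> m)) p \<le> gromov (\<xi> n) (act (inv f) (\<xi> m)) (act (inv f) p) + a1"
        unfolding a1_def by (rule gromov_base)
      moreover have "M + a1 \<le> gromov (\<xi> n) (act (inv f) (\<xi> m)) p" using N that gromov_sym by metis
      ultimately show ?thesis using e by linarith
    qed
    then show "\<exists>N. \<forall>n\<ge>N. \<forall>m\<ge>N. M \<le> gromov (act f (\<xi> n)) (\<xi> m) p" by blast
  qed
  then show ?thesis using b unfolding bd_fixed_def by simp
qed


lemma pick:
  assumes le: "loxodromic G act p e" and ne: "non_elementary G act p"
  shows "\<exists>f. loxodromic G act p f \<and>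
    (\<exists>B. \<forall>n s. gromov (act (e[^](n::nat)) p) (act (f[^](s::nat)) p) p \<le> B) \<and>
    (\<exists>B. \<forall>n s. gromov (act (e[^](n::nat)) p) (act ((inv f)[^](s::nat)) p) p \<le> B)"
proof (rule ccontr)
  assume nf: "\<not> ?thesis"
  obtain a b where ab: "loxodromic G act p a" "loxodromic G act p b"
    "\<not> (\<exists>\<xi>. bd_fixed act p a \<xi> \<and> bd_fixed act p b \<xi>)"
    using ne unfolding non_elementary_def by blast
  have H: "bd_fixed act p f (\<lambda>n. act (e[^]n) p)" if lf: "loxodromic G act p f" for f
  proof (cases "\<exists>B. \<forall>n s. gromov (act (e[^](n::nat)) p) (act (f[^](s::nat)) p) p \<le> B")
    case True
    then have "\<not> (\<exists>B. \<forall>n s. gromov (act (e[^](n::nat)) p) (act ((inv f)[^](s::nat)) p) p \<le> B)"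
      using nf lf by blast
    then have "bd_fixed act p (inv f) (\<lambda>n. act (e[^]n) p)"
      using fix_other[OF le lox_inv[OF lf]] by blast
    then show ?thesis using fix_inv lox_carrier[OF lf] by blast
  next
    case False
    then show ?thesis using fix_other[OF le lf] by blast
  qed
  show False using H[OF ab(1)] H[OF ab(2)] ab(3) by blast
qed

lemma seq_choose:
  fixes h :: "nat \<Rightarrow> real"
  assumes L: "L > 0" "\<And>n. h n \<ge> L * real n" and M: "M > 0"
  shows "\<exists>t::nat\<Rightarrow>nat. \<forall>i j. i < j \<longrightarrow> h (t j) \<ge> h (t i) + M \<and> t i \<le> t j"
proof -
  define t where "t = rec_nat 0 (\<lambda>i ti. nat \<lceil>(h ti + M)/L\<rceil>)"
  have tS: "t (Suc i) = nat \<lceil>(h (t i) + M)/L\<rceil>" for i unfolding t_def by simp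
  have step: "h (t (Suc i)) \<ge> h (t i) + M \<and> t i \<le> t (Suc i)" for i
  proof -
    have "real (t (Suc i)) \<ge> (h (t i) + M)/L" unfolding tS by linarith
    then have a: "L * real (t (Suc i)) \<ge> h (t i) + M" using L(1) by (simp add: field_simps)
    have "L * real (t i) + M \<le> L * real (t (Suc i))" using a L(2)[of "t i"] by linarith
    then have "L * real (t i) \<le> L * real (t (Suc i))" using M by linarith
    then have "t i \<le> t (Suc i)" using L(1) by (simp add: mult_le_cancel_left)
    then show ?thesis using a L(2)[of "t (Suc i)"] by linarith
  qed
  have "\<forall>i<j. h (t j) \<ge> h (t i) + M \<and> t i \<le> t j" for j
  proof (induction j)
    case 0
    then show ?case by simp
  next
    case (Suc j)
    show ?case
    proof (intro allI impI)
      fix i assume "i < Suc j"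
      then consider "i = j" | "i < j" by linarith
      then show "h (t (Suc j)) \<ge> h (t i) + M \<and> t i \<le> t (Suc j)"
      proof cases
        case 1 then show ?thesis using step[of j] by simp
      next
        case 2 then show ?thesis using Suc.IH step[of j] M by force
      qed
    qed
  qed
  then show ?thesis by blast
qed

lemma sep:
  assumes le: "loxodromic G act p e" and lf: "loxodromic G act p f"
    and Bp: "\<And>n s. gromov (act (e[^](n::nat)) p) (act (f[^](s::nat)) p) p \<le> Bp"
    and Bm: "\<And>n s. gromov (act (e[^](n::nat)) p) (act ((inv f)[^](s::nat)) p) p \<le> Bm"
  shows "\<exists>t::nat\<Rightarrow>nat. \<forall>i j n m. i < j \<longrightarrow>
    gromov (act (f[^](t i)) (act (e[^](n::nat)) p)) (act (f[^](t j::nat)) (act (e[^](m::nat)) p)) p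
      \<le> Bp + dd f p (t i) + \<delta>"
proof -
  have e: "e \<in> carrier G" using le by (rule lox_carrier)
  have f: "f \<in> carrier G" using lf by (rule lox_carrier)
  have Bp0: "Bp \<ge> 0" using Bp[of 0 0] by (simp add: gromov_self2)
  have Bm0: "Bm \<ge> 0" using Bm[of 0 0] by (simp add: gromov_self2)
  obtain L where L: "L > 0" "\<And>n. dd f p n \<ge> L * real n" using lox_lower[OF lf] by blast
  define Mc where "Mc = Bp + Bm + \<delta> + 1"
  have Mc: "Mc > 0" unfolding Mc_def using Bp0 Bm0 delta_nonneg by linarith
  obtain t :: "nat \<Rightarrow> nat" where t0: "\<forall>i j. i < j \<longrightarrow> dd f p (t j) \<ge> dd f p (t i) + Mc \<and> t i \<le> t j"
    using seq_choose[OF L Mc] by blast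
  have t: "dd f p (t j) \<ge> dd f p (t i) + Mc \<and> t i \<le> t j" if "i < j" for i j :: nat
    using t0 that by blast
  have dinv: "dist (act (inv h) p) p = dist p (act h p)" if "h \<in> carrier G" for h
    using act_dist[OF that, of "act (inv h) p" p] that by simp
  have "gromov (act (f[^](t i)) (act (e[^](n::nat)) p)) (act (f[^](t j::nat)) (act (e[^](m::nat)) p)) p
      \<le> Bp + dd f p (t i) + \<delta>" if ij: "i < j" for i j n m
  proof -
    define a where "a = f[^](t i)"
    define b where "b = f[^](t j)"
    define s where "s = t j - t i"
    have a: "a \<in> carrier G" and b: "b \<in> carrier G" unfolding a_def b_def using f by auto
    have bas: "b = a \<otimes> f[^]s" unfolding a_def b_def s_def using nat_pow_mult[OF f, of "t i" "t j - t i"] t[OF ij]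
      by simp
    define P where "P = act a (act (e[^]n) p)"
    define Q where "Q = act b (act (e[^]m) p)"
    define Z where "Z = act b p"
    have Z: "Z = act a (act (f[^]s) p)" unfolding Z_def bas by (rule act_mult[OF a nat_pow_closed[OF f]])
    have "gromov P Z p = gromov (act (e[^]n) p) (act (f[^]s) p) (act (inv a) p)"
      unfolding P_def Z by (rule gromov_act_base[OF a])
    moreover have "gromov (act (e[^]n) p) (act (f[^]s) p) (act (inv a) p) \<le>
       gromov (act (e[^]n) p) (act (f[^]s) p) p + dist (act (inv a) p) p"
      using gromov_base[of _ _ "act (inv a) p" p] by simp
    moreover have "dist (act (inv a) p) p = dd f p (t i)"
      unfolding dd_def a_def using dinv[of "f[^](t i)"] f by (simp add: dist_commute)
    ultimately have PZ: "gromov P Z p \<le> Bp + dd f p (t i)" using Bp[of n s] by linarith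
    define W where "W = act (inv b) p"
    have "gromov Q Z p = gromov (act (e[^]m) p) p W"
      unfolding Q_def Z_def W_def by (rule gromov_act_base[OF b])
    moreover have "gromov W (act (e[^]m) p) p + gromov p (act (e[^]m) p) W = dist p W" by (rule gromov_id)
    moreover have "dist p W = dd f p (t j)"
      unfolding W_def dd_def b_def using dinv[of "f[^](t j)"] f by (simp add: dist_commute)
    moreover have "W = act ((inv f)[^](t j)) p" unfolding W_def b_def using nat_pow_inv[OF f] by simp
    then have "gromov (act (e[^]m) p) W p \<le> Bm" using Bm[of m "t j"] by simp
    moreover have "gromov W (act (e[^]m) p) p = gromov (act (e[^]m) p) W p" by (rule gromov_sym)
    moreover have "gromov p (act (e[^]m) p) W = gromov (act (e[^]m) p) p W" by (rule gromov_sym)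
    ultimately have QZ: "gromov Q Z p \<ge> dd f p (t j) - Bm" by linarith
    have tt: "dd f p (t j) \<ge> dd f p (t i) + Mc" using t[OF ij] by simp
    have h: "gromov P Z p \<ge> min (gromov P Q p) (gromov Z Q p) - \<delta>" by (rule hyp4)
    have "gromov Z Q p = gromov Q Z p" by (rule gromov_sym)
    show ?thesis
    proof (rule ccontr)
      assume "\<not> ?thesis"
      then have "gromov P Q p > Bp + dd f p (t i) + \<delta>" unfolding P_def Q_def a_def b_def by simp
      then show False using h PZ QZ tt \<open>gromov Z Q p = gromov Q Z p\<close> unfolding Mc_def
        by (simp add: min_def split: if_split_asm)
    qed
  qed
  then show ?thesis by blast
qed

lemma count2:
  fixes F P Q :: "'a \<Rightarrow> 'x"
  assumes S: "finite S"
    and bad: "\<And>s. s \<in> S \<Longrightarrow> gromov x (F s) p > C \<Longrightarrow> gromov x (P s) p > T \<or> gromov y (Q s) p > T"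
    and pP: "\<And>s t. s \<in> S \<Longrightarrow> t \<in> S \<Longrightarrow> s \<noteq> t \<Longrightarrow> gromov (P s) (P t) p \<le> T - \<delta>"
    and pQ: "\<And>s t. s \<in> S \<Longrightarrow> t \<in> S \<Longrightarrow> s \<noteq> t \<Longrightarrow> gromov (Q s) (Q t) p \<le> T - \<delta>"
  shows "real (card {s\<in>S. gromov x (F s) p \<le> C}) \<ge> real (card S) - 2"
proof -
  have one: "card {s\<in>S. gromov z (R s) p > T} \<le> 1"
    if pR: "\<And>s t. s \<in> S \<Longrightarrow> t \<in> S \<Longrightarrow> s \<noteq> t \<Longrightarrow> gromov (R s) (R t) p \<le> T - \<delta>" for z R
  proof -
    have "\<forall>a\<in>{s\<in>S. gromov z (R s) p > T}. \<forall>b\<in>{s\<in>S. gromov z (R s) p > T}. a = b"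
    proof (intro ballI, rule ccontr)
      fix a b assume ab: "a \<in> {s\<in>S. gromov z (R s) p > T}" "b \<in> {s\<in>S. gromov z (R s) p > T}" "a \<noteq> b"
      have h: "gromov (R a) (R b) p \<ge> min (gromov (R a) z p) (gromov (R b) z p) - \<delta>" by (rule hyp4)
      have "gromov (R a) z p > T" using ab(1) gromov_sym[of "R a" z p] by simp
      moreover have "gromov (R b) z p > T" using ab(2) gromov_sym[of "R b" z p] by simp
      ultimately have "min (gromov (R a) z p) (gromov (R b) z p) > T" by simp
      moreover have "gromov (R a) (R b) p \<le> T - \<delta>" using pR[of a b] ab by simp
      ultimately show False using h by linarith
    qed
    then show ?thesis using S by (simp add: card_le_Suc0_iff_eq)
  qed
  have sub: "{s\<in>S. \<not> gromov x (F s) p \<le> C} \<subseteq> {s\<in>S. gromov x (P s) p > T} \<union> {s\<in>S. gromov y (Q s) p > T}"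
  proof (rule subsetI)
    fix s assume "s \<in> {s\<in>S. \<not> gromov x (F s) p \<le> C}"
    then have "s \<in> S" "gromov x (F s) p > C" by auto
    then have "gromov x (P s) p > T \<or> gromov y (Q s) p > T" using bad by blast
    then show "s \<in> {s\<in>S. gromov x (P s) p > T} \<union> {s\<in>S. gromov y (Q s) p > T}" using \<open>s \<in> S\<close> by blast
  qed
  have "card {s\<in>S. \<not> gromov x (F s) p \<le> C} \<le> card ({s\<in>S. gromov x (P s) p > T} \<union> {s\<in>S. gromov y (Q s) p > T})"
    using S sub by (intro card_mono) auto
  also have "\<dots> \<le> card {s\<in>S. gromov x (P s) p > T} + card {s\<in>S. gromov y (Q s) p > T}" by (rule card_Un_le)
  also have "\<dots> \<le> 2" using one[of P x, OF pP] one[of Q y, OF pQ] by simp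
  finally have cb: "card {s\<in>S. \<not> gromov x (F s) p \<le> C} \<le> 2" .
  have u: "{s\<in>S. gromov x (F s) p \<le> C} \<union> {s\<in>S. \<not> gromov x (F s) p \<le> C} = S" by blast
  have "card ({s\<in>S. gromov x (F s) p \<le> C} \<union> {s\<in>S. \<not> gromov x (F s) p \<le> C}) =
     card {s\<in>S. gromov x (F s) p \<le> C} + card {s\<in>S. \<not> gromov x (F s) p \<le> C}"
    by (rule card_Un_disjoint) (use S in auto)
  then have "card S = card {s\<in>S. gromov x (F s) p \<le> C} + card {s\<in>S. \<not> gromov x (F s) p \<le> C}"
    unfolding u .
  then show ?thesis using cb by linarith
qed


lemma dinv: "h \<in> carrier G \<Longrightarrow> dist p (act (inv h) p) = dist p (act h p)"
  using act_dist[of h p "act (inv h) p"] by (simp add: dist_commute)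

lemma badsplit:
  assumes s: "s \<in> carrier G" and d: "dist p (act s p) \<ge> 2*C + 1" and b: "gromov x (act s y) p > C"
  shows "gromov x (act s p) p > C - \<delta> \<or> gromov y (act (inv s) p) p > C - \<delta>"
proof (rule ccontr)
  assume "\<not> ?thesis"
  then have n1: "gromov x (act s p) p \<le> C - \<delta>" and n2: "gromov y (act (inv s) p) p \<le> C - \<delta>" by auto
  have h: "gromov x (act s p) p \<ge> min (gromov x (act s y) p) (gromov (act s p) (act s y) p) - \<delta>"
    by (rule hyp4)
  have m: "gromov (act s p) (act s y) p \<le> C"
  proof (rule ccontr)
    assume "\<not> ?thesis"
    then have "min (gromov x (act s y) p) (gromov (act s p) (act s y) p) > C" using b by simp
    then show False using h n1 by linarith
  qed
  define W where "W = act (inv s) p"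
  have e1: "gromov (act s p) (act s y) p = gromov p y W" unfolding W_def by (rule gromov_act_base[OF s])
  have e2: "gromov W y p + gromov p y W = dist p W" by (rule gromov_id)
  have e3: "dist p W = dist p (act s p)" unfolding W_def by (rule dinv[OF s])
  have e4: "gromov W y p = gromov y W p" by (rule gromov_sym)
  show False using m e1 e2 e3 e4 n2 d delta_nonneg unfolding W_def by linarith
qed

lemma main:
  assumes ne: "non_elementary G act p" and wpd: "WPD G act p g" and eta: "0 < \<eta>" "\<eta> < 1"
  shows "\<exists>C>0. \<forall>D>0. \<forall>K>0. \<exists>S. schottky G act p \<eta> C D S \<and> (\<forall>s\<in>S. finite (Stab G act K p (act s p)))"
proof -
  have lg: "loxodromic G act p g" using wpd unfolding WPD_def by auto
  have g: "g \<in> carrier G" using lg by (rule lox_carrier)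
  have lgi: "loxodromic G act p (inv g)" using lox_inv[OF lg] .
  obtain f1 Bp1 Bm1 where f1: "loxodromic G act p f1"
    "\<And>n s. gromov (act (g[^](n::nat)) p) (act (f1[^](s::nat)) p) p \<le> Bp1"
    "\<And>n s. gromov (act (g[^](n::nat)) p) (act ((inv f1)[^](s::nat)) p) p \<le> Bm1"
    using pick[OF lg ne] by blast
  obtain f2 Bp2 Bm2 where f2: "loxodromic G act p f2"
    "\<And>n s. gromov (act ((inv g)[^](n::nat)) p) (act (f2[^](s::nat)) p) p \<le> Bp2"
    "\<And>n s. gromov (act ((inv g)[^](n::nat)) p) (act ((inv f2)[^](s::nat)) p) p \<le> Bm2"
    using pick[OF lgi ne] by blast
  have f1c: "f1 \<in> carrier G" using f1(1) by (rule lox_carrier)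
  have f2c: "f2 \<in> carrier G" using f2(1) by (rule lox_carrier)
  have Bp1: "Bp1 \<ge> 0" using f1(2)[of 0 0] by (simp add: gromov_self2)
  have Bp2: "Bp2 \<ge> 0" using f2(2)[of 0 0] by (simp add: gromov_self2)
  obtain t1 :: "nat \<Rightarrow> nat" where t1: "\<And>i j n m. i < j \<Longrightarrow>
    gromov (act (f1[^](t1 i)) (act (g[^](n::nat)) p)) (act (f1[^](t1 j)) (act (g[^](m::nat)) p)) p
      \<le> Bp1 + dd f1 p (t1 i) + \<delta>"
    using sep[OF lg f1(1) f1(2) f1(3)] by blast
  obtain t2 :: "nat \<Rightarrow> nat" where t2: "\<And>i j n m. i < j \<Longrightarrow>
    gromov (act (f2[^](t2 i)) (act ((inv g)[^](n::nat)) p)) (act (f2[^](t2 j)) (act ((inv g)[^](m::nat)) p)) p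
      \<le> Bp2 + dd f2 p (t2 i) + \<delta>"
    using sep[OF lgi f2(1) f2(2) f2(3)] by blast
  define N where "N = nat \<lceil>2/\<eta>\<rceil>"
  have "2/\<eta> > 2" using eta by (simp add: field_simps)
  then have N2: "N \<ge> 2" unfolding N_def by linarith
  have etaN: "\<eta> * real N \<ge> 2"
  proof -
    have "real N \<ge> 2/\<eta>" unfolding N_def by linarith
    then show ?thesis using eta by (simp add: field_simps)
  qed
  define u where "u = (\<lambda>i. f1[^](t1 i))"
  define v where "v = (\<lambda>i. f2[^](t2 i))"
  have uc: "u i \<in> carrier G" for i unfolding u_def using f1c by simp
  have vc: "v i \<in> carrier G" for i unfolding v_def using f2c by simp
  define R where "R = Max ((\<lambda>i. dist p (act (u i) p) + dist p (act (v i) p)) ` {..<N})"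
  define Bs where "Bs = Max ((\<lambda>i. dd f1 p (t1 i) + dd f2 p (t2 i)) ` {..<N})"
  have Ru: "dist p (act (u i) p) \<le> R" and Rv: "dist p (act (v i) p) \<le> R" if "i < N" for i
  proof -
    have "dist p (act (u i) p) + dist p (act (v i) p) \<le> R" unfolding R_def using that by (intro Max_ge) auto
    then show "dist p (act (u i) p) \<le> R" "dist p (act (v i) p) \<le> R" using zero_le_dist[of p] by (smt (verit))+
  qed
  have Bs1: "dd f1 p (t1 i) \<le> Bs" and Bs2: "dd f2 p (t2 i) \<le> Bs" if "i < N" for i
  proof -
    have "dd f1 p (t1 i) + dd f2 p (t2 i) \<le> Bs" unfolding Bs_def using that by (intro Max_ge) auto
    then show "dd f1 p (t1 i) \<le> Bs" "dd f2 p (t2 i) \<le> Bs" using dd_nonneg[of f1 p] dd_nonneg[of f2 p] by (smt (verit))+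
  qed
  have R0: "R \<ge> 0"
  proof -
    have "dist p (act (u 0) p) \<le> R" using Ru[of 0] N2 by simp
    then show ?thesis using zero_le_dist[of p "act (u 0) p"] by linarith
  qed
  have Bs0: "Bs \<ge> 0"
  proof -
    have "dd f1 p (t1 0) \<le> Bs" using Bs1[of 0] N2 by simp
    then show ?thesis using dd_nonneg[of f1 p "t1 0"] by linarith
  qed
  have pu: "gromov (act (u i) (act (g[^](n::nat)) p)) (act (u j) (act (g[^](m::nat)) p)) p \<le> Bp1 + Bs + \<delta>"
    if "i < N" "j < N" "i \<noteq> j" for i j n m
  proof (cases "i < j")
    case True
    then show ?thesis using t1[OF True, of n m] Bs1[OF that(1)] unfolding u_def by simp
  next
    case False
    then have "j < i" using that by simp
    then show ?thesis using t1[of j i m n] Bs1[OF that(2)] gromov_sym unfolding u_def by (smt (verit))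
  qed
  have pv: "gromov (act (v i) (act ((inv g)[^](n::nat)) p)) (act (v j) (act ((inv g)[^](m::nat)) p)) p \<le> Bp2 + Bs + \<delta>"
    if "i < N" "j < N" "i \<noteq> j" for i j n m
  proof (cases "i < j")
    case True
    then show ?thesis using t2[OF True, of n m] Bs2[OF that(1)] unfolding v_def by simp
  next
    case False
    then have "j < i" using that by simp
    then show ?thesis using t2[of j i m n] Bs2[OF that(2)] gromov_sym unfolding v_def by (smt (verit))
  qed
  define Csep where "Csep = Bp1 + Bp2 + Bs + \<delta> + 2*R"
  define C where "C = Csep + 2*\<delta> + 1"
  have Csep0: "Csep \<ge> 0" unfolding Csep_def using Bp1 Bp2 Bs0 R0 delta_nonneg by linarith
  have C0: "C > 0" unfolding C_def using Csep0 delta_nonneg by linarith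
  have "\<forall>D>0. \<forall>K>0. \<exists>S. schottky G act p \<eta> C D S \<and> (\<forall>s\<in>S. finite (Stab G act K p (act s p)))"
  proof (intro allI impI)
    fix D K :: real assume D: "D > 0" and K: "K > 0"
    obtain n where n: "dd g p n \<ge> max D (2*C+1) + 2*R" "finite (Stab G act (K + 2*R) p (act (g[^]n) p))"
      using stab_big[OF wpd, of "K + 2*R" "max D (2*C+1) + 2*R"] K R0 by auto
    define s where "s = (\<lambda>i. u i \<otimes> g[^]n \<otimes> inv (v i))"
    have sc: "s i \<in> carrier G" for i unfolding s_def using uc vc g by simp
    have sp: "act (s i) p = act (u i) (act (g[^]n) (act (inv (v i)) p))" for i
      unfolding s_def using uc vc g by (simp add: act_mult)
    have sb: "dist (act (s i) p) (act (u i) (act (g[^]n) p)) \<le> R" if "i < N" for i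
    proof -
      have "dist (act (s i) p) (act (u i) (act (g[^]n) p)) = dist (act (inv (v i)) p) p"
        unfolding sp using uc g vc by simp
      also have "\<dots> = dist p (act (v i) p)" using dinv[OF vc[of i]] by (simp add: dist_commute)
      finally show ?thesis using Rv[OF that] by simp
    qed
    have si: "inv (s i) = v i \<otimes> (inv g)[^]n \<otimes> inv (u i)" for i
      unfolding s_def using uc vc g by (simp add: inv_mult_group nat_pow_inv m_assoc)
    have sip: "act (inv (s i)) p = act (v i) (act ((inv g)[^]n) (act (inv (u i)) p))" for i
      unfolding si using uc vc g by (simp add: act_mult)
    have sib: "dist (act (inv (s i)) p) (act (v i) (act ((inv g)[^]n) p)) \<le> R" if "i < N" for i
    proof -
      have "dist (act (inv (s i)) p) (act (v i) (act ((inv g)[^]n) p)) = dist (act (inv (u i)) p) p"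
        unfolding sip using uc g vc by simp
      also have "\<dots> = dist p (act (u i) p)" using dinv[OF uc[of i]] by (simp add: dist_commute)
      finally show ?thesis using Ru[OF that] by simp
    qed
    have sd: "dist p (act (s i) p) \<ge> max D (2*C+1)" if "i < N" for i
    proof -
      have "dist (act (u i) p) (act (u i) (act (g[^]n) p)) = dd g p n" unfolding dd_def using uc by (simp add: dist_commute)
      moreover have "dist (act (u i) p) (act (u i) (act (g[^]n) p)) \<le> dist (act (u i) p) p + dist p (act (s i) p) + dist (act (s i) p) (act (u i) (act (g[^]n) p))"
        by (rule tri3)
      moreover have "dist (act (u i) p) p = dist p (act (u i) p)" by (rule dist_commute)
      ultimately have X: "dd g p n \<le> R + dist p (act (s i) p) + R" using sb[OF that] Ru[OF that] by linarith
      show ?thesis using X n(1) by linarith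
    qed
    have sid: "dist p (act (inv (s i)) p) = dist p (act (s i) p)" for i using dinv[OF sc[of i]] .
    have sstab: "finite (Stab G act K p (act (s i) p))" if "i < N" for i
    proof -
      define w where "w = u i"
      have wc: "w \<in> carrier G" unfolding w_def by (rule uc)
      have sub: "Stab G act K p (act (s i) p) \<subseteq> (\<lambda>\<phi>. w \<otimes> \<phi> \<otimes> inv w) ` Stab G act (K + 2*R) p (act (g[^]n) p)"
      proof
        fix f assume "f \<in> Stab G act K p (act (s i) p)"
        then have f: "f \<in> carrier G" "dist p (act f p) \<le> K" "dist (act (s i) p) (act f (act (s i) p)) \<le> K"
          unfolding Stab_def by auto
        define \<phi> where "\<phi> = inv w \<otimes> f \<otimes> w"
        have \<phi>c: "\<phi> \<in> carrier G" unfolding \<phi>_def using f wc by simp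
        have "w \<otimes> \<phi> \<otimes> inv w = w \<otimes> (inv w \<otimes> f)" unfolding \<phi>_def using f wc by (simp add: m_assoc)
        also have "\<dots> = f" using f wc by (simp add: m_assoc[symmetric])
        finally have fe: "f = w \<otimes> \<phi> \<otimes> inv w" by simp
        have act\<phi>: "act \<phi> x = act (inv w) (act f (act w x))" for x unfolding \<phi>_def using f wc by (simp add: act_mult)
        have "dist p (act \<phi> p) = dist (act w p) (act f (act w p))"
          unfolding act\<phi> using act_dist[OF wc, of p "act (inv w) (act f (act w p))"] wc by simp
        also have "\<dots> \<le> dist (act w p) p + dist p (act f p) + dist (act f p) (act f (act w p))"
          by (rule tri3)
        also have "\<dots> \<le> R + K + R" using f Ru[OF that] unfolding w_def by (simp add: dist_commute)
        finally have d1: "dist p (act \<phi> p) \<le> K + 2*R" by simp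
        define Y where "Y = act w (act (g[^]n) p)"
        have "dist (act (g[^]n) p) (act \<phi> (act (g[^]n) p)) = dist Y (act f Y)"
          unfolding act\<phi> Y_def using act_dist[OF wc, of "act (g[^]n) p" "act (inv w) (act f (act w (act (g[^]n) p)))"] wc by simp
        also have "\<dots> \<le> dist Y (act (s i) p) + dist (act (s i) p) (act f (act (s i) p)) + dist (act f (act (s i) p)) (act f Y)"
          by (rule tri3)
        also have "\<dots> \<le> R + K + R" using f sb[OF that] unfolding Y_def w_def by (simp add: dist_commute)
        finally have d2: "dist (act (g[^]n) p) (act \<phi> (act (g[^]n) p)) \<le> K + 2*R" by simp
        have "\<phi> \<in> Stab G act (K + 2*R) p (act (g[^]n) p)" unfolding Stab_def using \<phi>c d1 d2 by simp
        then show "f \<in> (\<lambda>\<phi>. w \<otimes> \<phi> \<otimes> inv w) ` Stab G act (K + 2*R) p (act (g[^]n) p)" using fe by blast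
      qed
      show ?thesis using finite_subset[OF sub] n(2) by blast
    qed
    have ps: "gromov (act (s i) p) (act (s j) p) p \<le> Csep" if "i < N" "j < N" "i \<noteq> j" for i j
    proof -
      have "gromov (act (s i) p) (act (s j) p) p \<le> gromov (act (u i) (act (g[^]n) p)) (act (u j) (act (g[^]n) p)) p
        + dist (act (s i) p) (act (u i) (act (g[^]n) p)) + dist (act (s j) p) (act (u j) (act (g[^]n) p)) + dist p p"
        by (rule gromov_perturb)
      then show ?thesis using pu[OF that, of n n] sb[OF that(1)] sb[OF that(2)] Bp2 unfolding Csep_def by simp
    qed
    have pis: "gromov (act (inv (s i)) p) (act (inv (s j)) p) p \<le> Csep" if "i < N" "j < N" "i \<noteq> j" for i j
    proof -
      have "gromov (act (inv (s i)) p) (act (inv (s j)) p) p \<le> gromov (act (v i) (act ((inv g)[^]n) p)) (act (v j) (act ((inv g)[^]n) p)) p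
        + dist (act (inv (s i)) p) (act (v i) (act ((inv g)[^]n) p)) + dist (act (inv (s j)) p) (act (v j) (act ((inv g)[^]n) p)) + dist p p"
        by (rule gromov_perturb)
      then show ?thesis using pv[OF that, of n n] sib[OF that(1)] sib[OF that(2)] Bp1 unfolding Csep_def by simp
    qed
    have inj: "inj_on s {..<N}"
    proof (rule inj_onI)
      fix i j assume ij: "i \<in> {..<N}" "j \<in> {..<N}" "s i = s j"
      show "i = j"
      proof (rule ccontr)
        assume "i \<noteq> j"
        then have "gromov (act (s i) p) (act (s j) p) p \<le> Csep" using ps[of i j] ij by blast
        moreover have "gromov (act (s i) p) (act (s j) p) p = dist p (act (s i) p)"
          using ij(3) gromov_same[of "act (s j) p" p] by (simp add: dist_commute)
        moreover have "dist p (act (s i) p) \<ge> 2*C + 1" using sd ij(1) by fastforce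
        ultimately show False unfolding C_def using delta_nonneg Csep0 by (smt (verit))
      qed
    qed
    define S where "S = s ` {..<N}"
    have cardS: "card S = N" unfolding S_def using card_image[OF inj] by simp
    have finS: "finite S" unfolding S_def by simp
    have "s 0 \<in> S" unfolding S_def using N2 by simp
    then have Sne: "S \<noteq> {}" by blast
    have Sc: "S \<subseteq> carrier G" unfolding S_def using sc by auto
    have Sd: "\<forall>t\<in>S. dist p (act t p) \<ge> D" unfolding S_def using sd by fastforce
    have Sd2: "\<And>t. t \<in> S \<Longrightarrow> dist p (act t p) \<ge> 2*C+1" unfolding S_def using sd by fastforce
    have pS: "gromov (act a p) (act b p) p \<le> (C - \<delta>) - \<delta>" if ab: "a \<in> S" "b \<in> S" "a \<noteq> b" for a b
    proof -
      obtain i where i: "i < N" "a = s i" using ab(1) unfolding S_def by blast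
      obtain j where j: "j < N" "b = s j" using ab(2) unfolding S_def by blast
      have ij: "i \<noteq> j" using i j ab(3) by auto
      have "gromov (act a p) (act b p) p \<le> Csep" using ps[OF i(1) j(1) ij] i(2) j(2) by simp
      then show ?thesis unfolding C_def by simp
    qed
    have piS: "gromov (act (inv a) p) (act (inv b) p) p \<le> (C - \<delta>) - \<delta>" if ab: "a \<in> S" "b \<in> S" "a \<noteq> b" for a b
    proof -
      obtain i where i: "i < N" "a = s i" using ab(1) unfolding S_def by blast
      obtain j where j: "j < N" "b = s j" using ab(2) unfolding S_def by blast
      have ij: "i \<noteq> j" using i j ab(3) by auto
      have "gromov (act (inv a) p) (act (inv b) p) p \<le> Csep" using pis[OF i(1) j(1) ij] i(2) j(2) by simp
      then show ?thesis unfolding C_def by simp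
    qed
    have cnt: "real (card {t\<in>S. gromov x (act t y) p \<le> C}) \<ge> (1 - \<eta>) * real (card S)" for x y
    proof -
      have "real (card {t\<in>S. gromov x (act t y) p \<le> C}) \<ge> real (card S) - 2"
      proof (rule count2[OF finS, where P = "\<lambda>t. act t p" and Q = "\<lambda>t. act (inv t) p" and T = "C - \<delta>"])
        fix t assume "t \<in> S" "gromov x (act t y) p > C"
        then show "gromov x (act t p) p > C - \<delta> \<or> gromov y (act (inv t) p) p > C - \<delta>"
          using badsplit[where s=t and C=C and x=x and y=y and p=p] Sc Sd2 by auto
      next
        fix a b assume "a \<in> S" "b \<in> S" "a \<noteq> b"
        then show "gromov (act a p) (act b p) p \<le> C - \<delta> - \<delta>" by (rule pS)
      next
        fix a b assume "a \<in> S" "b \<in> S" "a \<noteq> b"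
        then show "gromov (act (inv a) p) (act (inv b) p) p \<le> C - \<delta> - \<delta>" by (rule piS)
      qed
      then show ?thesis using etaN cardS by (simp add: algebra_simps)
    qed
    have cnti: "real (card {t\<in>S. gromov x (act (inv t) y) p \<le> C}) \<ge> (1 - \<eta>) * real (card S)" for x y
    proof -
      have "real (card {t\<in>S. gromov x (act (inv t) y) p \<le> C}) \<ge> real (card S) - 2"
      proof (rule count2[OF finS, where P = "\<lambda>t. act (inv t) p" and Q = "\<lambda>t. act t p" and T = "C - \<delta>"])
        fix t assume t: "t \<in> S" "gromov x (act (inv t) y) p > C"
        have tc: "t \<in> carrier G" using t Sc by auto
        have "dist p (act (inv t) p) \<ge> 2*C+1" using Sd2[OF t(1)] dinv[OF tc] by simp
        then show "gromov x (act (inv t) p) p > C - \<delta> \<or> gromov y (act t p) p > C - \<delta>"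
          using badsplit[where s="inv t" and C=C and x=x and y=y and p=p] t tc by simp
      next
        fix a b assume "a \<in> S" "b \<in> S" "a \<noteq> b"
        then show "gromov (act (inv a) p) (act (inv b) p) p \<le> C - \<delta> - \<delta>" by (rule piS)
      next
        fix a b assume "a \<in> S" "b \<in> S" "a \<noteq> b"
        then show "gromov (act a p) (act b p) p \<le> C - \<delta> - \<delta>" by (rule pS)
      qed
      then show ?thesis using etaN cardS by (simp add: algebra_simps)
    qed
    have "schottky G act p \<eta> C D S"
      unfolding schottky_def using finS Sne Sc cnt cnti Sd by blast
    moreover have "\<forall>t\<in>S. finite (Stab G act K p (act t p))" unfolding S_def using sstab by auto
    ultimately show "\<exists>S. schottky G act p \<eta> C D S \<and> (\<forall>s\<in>S. finite (Stab G act K p (act s p)))" by blast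
  qed
  then show ?thesis using C0 by blast
qed

end

theorem lemma5p5:
  fixes G :: "('g, 'b) monoid_scheme" and act :: "'g \<Rightarrow> 'x::metric_space \<Rightarrow> 'x"
    and \<delta> :: real and x0 :: 'x and \<eta> :: real
  assumes "group G"
    and "isometric_action G act"
    and "geodesic_space TYPE('x)"
    and "hyperbolic TYPE('x) \<delta>"
    and "non_elementary G act x0"
    and "\<exists>g. WPD G act x0 g"
    and "0 < \<eta>" and "\<eta> < 1"
  shows "\<exists>C>0. \<forall>D>0. \<forall>K>0. \<exists>S. schottky G act x0 \<eta> C D S \<and>
           (\<forall>s\<in>S. finite (Stab G act K x0 (act s x0)))"
proof -
  have "hact G act \<delta>" unfolding hact_def hact_axioms_def using assms(1,2,4) by simp
  then interpret H: hact G act \<delta> .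
  obtain g where "WPD G act x0 g" using assms(6) by blast
  then show ?thesis using H.main[OF assms(5) _ assms(7,8)] by blast
qed

end
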